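(* In the model described in the context with $b=0$, the outcome consisting of the Mussa–Rosen mechanism $(q^{MR},t^{MR})$ together with the distribution $G=F_0$ (full revelation of $\theta$) is a solution to the monopolist's problem.
   Context: A monopolist sells goods of quality $q\in[0,\bar q]$ (for some fixed $\bar q>0$) to a buyer. The buyer's value $\theta\in[0,1]$ is drawn from a CDF $F_0$ with density $f_0>0$ on $[0,1]$; $F_0$ has increasing hazard rate. Neither the monopolist nor the buyer knows $\theta$. The cost of quality $q$ is $c(q)$, where $c:\mathbb{R}_+\to\mathbb{R}_+$ is strictly increasing, continuously differentiable and strictly convex. A menu is a set of items $(q,t)\in[0,\bar q]\times\mathbb{R}_+$ containing $(0,0)$. The buyer's utility from $(q,t)$ is $\theta q-t$; an intermediary with commonly known bias $b\ge0$ has utility $(\theta+b)q-t$. Timing: the monopolist posts a menu; the intermediary commits to a signal about $\theta$; the buyer observes the realization and chooses an item. Payoffs depend only on the posterior mean $w=\mathbb{E}[\theta\mid s]$; a signal is identified with the CDF $G$ of $w$, and feasible $G$ form $MPC(F_0)=\{G \text{ CDF on }[0,1]: \int_0^x (F_0-G)\ge 0\ \forall x,\ \text{equality at }x=1\}$. Indifferences of the buyer are broken toward higher quality and toward participation. A mechanism is $q:[0,1]\to[0,\bar q]$, $t:[0,1]\to\mathbb{R}_+$. The monopolist's problem: maximize $\int_0^1[t(w)-c(q(w))]\,dG(w)$ over $(q,t)$ and $G\in MPC(F_0)$ subject to (B-IC) $wq(w)-t(w)\ge wq(w')-t(w')$ for all $w,w'$; (B-IR) $wq(w)-t(w)\ge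 0$ for all $w$; (I-OB) $G\in\arg\max_{H\in MPC(F_0)}\int[(w+b)q(w)-t(w)]\,dH(w)$. The Mussa–Rosen mechanism $(q^{MR},t^{MR})$ is the optimal mechanism in the standard screening problem in which the buyer privately knows $\theta\sim F_0$, i.e. it maximizes $\int_0^1[t(\theta)-c(q(\theta))]\,dF_0(\theta)$ subject to (B-IC) and (B-IR) with $w$ replaced by $\theta$. *)

theory Defs
  imports "HOL-Analysis.Analysis"
begin

definition is_cdf01 :: "(real \<Rightarrow> real) \<Rightarrow> bool" where
  "is_cdf01 G \<longleftrightarrow> mono G \<and> (\<forall>x. continuous (at_right x) G)
     \<and> (\<forall>x<0. G x = 0) \<and> (\<forall>x\<ge>1. G x = 1)"

definition MPC :: "(real \<Rightarrow> real) \<Rightarrow> (real \<Rightarrow> real) set" where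
  "MPC F0 = {G. is_cdf01 G
      \<and> (\<forall>x\<in>{0..1}. integral {0..x} (\<lambda>s. F0 s - G s) \<ge> 0)
      \<and> integral {0..1} (\<lambda>s. F0 s - G s) = 0}"

definition expect :: "(real \<Rightarrow> real) \<Rightarrow> (real \<Rightarrow> real) \<Rightarrow> real" where
  "expect G f = set_lebesgue_integral (interval_measure G) {0..1} f"

definition strictly_convex_on :: "real set \<Rightarrow> (real \<Rightarrow> real) \<Rightarrow> bool" where
  "strictly_convex_on S c \<longleftrightarrow> (\<forall>x\<in>S. \<forall>y\<in>S. \<forall>u. x \<noteq> y \<and> 0 < u \<and> u < 1 \<longrightarrow>
      c (u * x + (1 - u) * y) < u * c x + (1 - u) * c y)"

definition mechanism :: "real \<Rightarrow> (real \<Rightarrow> real) \<Rightarrow> (real \<Rightarrow> real) \<Rightarrow> bool" where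
  "mechanism qbar q t \<longleftrightarrow> (\<forall>w\<in>{0..1}. 0 \<le> q w \<and> q w \<le> qbar \<and> 0 \<le> t w)"

definition B_IC :: "(real \<Rightarrow> real) \<Rightarrow> (real \<Rightarrow> real) \<Rightarrow> bool" where
  "B_IC q t \<longleftrightarrow> (\<forall>w\<in>{0..1}. \<forall>w'\<in>{0..1}. w * q w - t w \<ge> w * q w' - t w')"

definition B_IR :: "(real \<Rightarrow> real) \<Rightarrow> (real \<Rightarrow> real) \<Rightarrow> bool" where
  "B_IR q t \<longleftrightarrow> (\<forall>w\<in>{0..1}. w * q w - t w \<ge> 0)"

definition I_OB :: "(real \<Rightarrow> real) \<Rightarrow> real \<Rightarrow> (real \<Rightarrow> real) \<Rightarrow> (real \<Rightarrow> real)
    \<Rightarrow> (real \<Rightarrow> real) \<Rightarrow> bool" where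
  "I_OB F0 b q t G \<longleftrightarrow> G \<in> MPC F0 \<and>
     (\<forall>H\<in>MPC F0. expect H (\<lambda>w. (w + b) * q w - t w) \<le> expect G (\<lambda>w. (w + b) * q w - t w))"

definition monopolist_feasible :: "(real \<Rightarrow> real) \<Rightarrow> real \<Rightarrow> real \<Rightarrow> (real \<Rightarrow> real)
    \<Rightarrow> (real \<Rightarrow> real) \<Rightarrow> (real \<Rightarrow> real) \<Rightarrow> bool" where
  "monopolist_feasible F0 b qbar q t G \<longleftrightarrow>
     mechanism qbar q t \<and> G \<in> MPC F0 \<and> B_IC q t \<and> B_IR q t \<and> I_OB F0 b q t G"

definition monopolist_solution :: "(real \<Rightarrow> real) \<Rightarrow> (real \<Rightarrow> real) \<Rightarrow> real \<Rightarrow> real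
    \<Rightarrow> (real \<Rightarrow> real) \<Rightarrow> (real \<Rightarrow> real) \<Rightarrow> (real \<Rightarrow> real) \<Rightarrow> bool" where
  "monopolist_solution F0 c b qbar q t G \<longleftrightarrow>
     monopolist_feasible F0 b qbar q t G \<and>
     (\<forall>q' t' G'. monopolist_feasible F0 b qbar q' t' G' \<longrightarrow>
        expect G' (\<lambda>w. t' w - c (q' w)) \<le> expect G (\<lambda>w. t w - c (q w)))"

definition mussa_rosen :: "(real \<Rightarrow> real) \<Rightarrow> (real \<Rightarrow> real) \<Rightarrow> real
    \<Rightarrow> (real \<Rightarrow> real) \<Rightarrow> (real \<Rightarrow> real) \<Rightarrow> bool" where
  "mussa_rosen F0 c qbar q t \<longleftrightarrow>
     mechanism qbar q t \<and> B_IC q t \<and> B_IR q t \<and>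
     (\<forall>q' t'. mechanism qbar q' t' \<and> B_IC q' t' \<and> B_IR q' t' \<longrightarrow>
        expect F0 (\<lambda>\<theta>. t' \<theta> - c (q' \<theta>)) \<le> expect F0 (\<lambda>\<theta>. t \<theta> - c (q \<theta>)))"

end

theory Submission
  imports Defs "HOL-Probability.Probability"
begin

lemma mech_basic:
  fixes q t :: "real \<Rightarrow> real" and qbar :: real
  assumes M: "mechanism qbar q t" and IC: "B_IC q t" and IR: "B_IR q t"
  shows mech_q_mono: "mono_on {0..1} q"
    and mech_t_mono: "mono_on {0..1} t"
    and mech_q_bnd: "\<And>w. w \<in> {0..1} \<Longrightarrow> 0 \<le> q w \<and> q w \<le> qbar"
    and mech_t_bnd: "\<And>w. w \<in> {0..1} \<Longrightarrow> 0 \<le> t w \<and> t w \<le> qbar"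
    and mech_u_lo: "\<And>x y. x \<in> {0..1} \<Longrightarrow> y \<in> {0..1} \<Longrightarrow> q x * (y - x) \<le> (y * q y - t y) - (x * q x - t x)"
    and mech_u_hi: "\<And>x y. x \<in> {0..1} \<Longrightarrow> y \<in> {0..1} \<Longrightarrow> (y * q y - t y) - (x * q x - t x) \<le> q y * (y - x)"
    and mech_t_eq: "\<And>x y. x \<in> {0..1} \<Longrightarrow> y \<in> {0..1} \<Longrightarrow> q x = q y \<Longrightarrow> t x = t y"
proof -
  have ic: "\<And>w w'. w \<in> {0..1} \<Longrightarrow> w' \<in> {0..1} \<Longrightarrow> w * q w - t w \<ge> w * q w' - t w'"
    using IC unfolding B_IC_def by blast
  show lo: "q x * (y - x) \<le> (y * q y - t y) - (x * q x - t x)" if "x \<in> {0..1}" "y \<in> {0..1}" for x y :: real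
    using ic[OF that(2,1)] by (simp add: algebra_simps)
  show hi: "(y * q y - t y) - (x * q x - t x) \<le> q y * (y - x)" if "x \<in> {0..1}" "y \<in> {0..1}" for x y :: real
    using ic[OF that(1,2)] by (simp add: algebra_simps)
  show qm: "mono_on {0..1} q"
  proof (rule mono_onI)
    fix x y :: real assume "x \<in> {0..1}" "y \<in> {0..1}" "x \<le> y"
    with lo[of x y] hi[of x y] have "(q y - q x) * (y - x) \<ge> 0" by (simp add: algebra_simps)
    show "q x \<le> q y"
    proof (cases "x = y")
      case False
      with \<open>x \<le> y\<close> have "y - x > 0" by simp
      with \<open>(q y - q x) * (y - x) \<ge> 0\<close> show ?thesis
        by (simp add: zero_le_mult_iff)
    qed simp
  qed
  show "mono_on {0..1} t"
  proof (rule mono_onI)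
    fix x y :: real assume xy: "x \<in> {0..1}" "y \<in> {0..1}" "x \<le> y"
    have "q x \<le> q y" using qm xy by (simp add: mono_onD)
    have "t y - t x \<ge> x * (q y - q x)" using ic[OF xy(1,2)] by (simp add: algebra_simps)
    moreover have "x * (q y - q x) \<ge> 0" using xy \<open>q x \<le> q y\<close> by simp
    ultimately show "t x \<le> t y" by simp
  qed
  show qb: "0 \<le> q w \<and> q w \<le> qbar" if "w \<in> {0..1}" for w :: real
    using M that unfolding mechanism_def by blast
  show "0 \<le> t w \<and> t w \<le> qbar" if "w \<in> {0..1}" for w :: real
  proof -
    have "t w \<le> w * q w" using IR that unfolding B_IR_def by auto
    also have "\<dots> \<le> 1 * q w" using that qb[OF that] by (intro mult_right_mono) auto
    finally show ?thesis using qb[OF that] M that unfolding mechanism_def by force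
  qed
  show "t x = t y" if "x \<in> {0..1}" "y \<in> {0..1}" "q x = q y" for x y :: real
    using ic[OF that(1,2)] ic[OF that(2,1)] that(3) by simp
qed

lemma small_imp_zero:
  fixes a C :: real
  assumes "\<And>n::nat. n > 0 \<Longrightarrow> \<bar>a\<bar> \<le> C / real n"
  shows "a = 0"
proof (rule ccontr)
  assume "a \<noteq> 0"
  hence pos: "\<bar>a\<bar> > 0" by simp
  obtain n :: nat where n: "real n > C / \<bar>a\<bar>" using reals_Archimedean2 by blast
  define m where "m = Suc n"
  have "real m > C / \<bar>a\<bar>" using n unfolding m_def by simp
  hence "real m * \<bar>a\<bar> > C" using pos by (simp add: field_simps)
  moreover have "\<bar>a\<bar> \<le> C / real m" using assms[of m] unfolding m_def by simp
  hence "real m * \<bar>a\<bar> \<le> C" unfolding m_def by (simp add: field_simps)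
  ultimately show False by simp
qed

lemma u_repr:
  fixes q t :: "real \<Rightarrow> real" and qbar :: real
  assumes M: "mechanism qbar q t" and IC: "B_IC q t" and IR: "B_IR q t"
    and w: "w \<in> {0..1}"
  shows "w * q w - t w = - t 0 + integral {0..w} q"
proof -
  note qm = mech_q_mono[OF M IC IR]
  note qb = mech_q_bnd[OF M IC IR]
  have qint: "q integrable_on {a..b}" if "0 \<le> a" "b \<le> 1" for a b
    by (rule integrable_on_mono_on, rule mono_on_subset[OF qm]) (use that in auto)
  define V where "V x = (x * q x - t x) - integral {0..x} q" for x
  have step: "\<bar>V y - V x\<bar> \<le> (q y - q x) * (y - x)" if xy: "0 \<le> x" "x \<le> y" "y \<le> 1" for x y
  proof -
    have comb: "integral {0..y} q = integral {0..x} q + integral {x..y} q"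
      using Henstock_Kurzweil_Integration.integral_combine[where a=0 and c=x and b=y and f=q] qint[of 0 y] xy by simp
    have i1: "integral {x..y} q \<ge> q x * (y - x)"
    proof -
      have "integral {x..y} (\<lambda>_. q x) \<le> integral {x..y} q"
        by (rule integral_le) (use qint[of x y] xy qm in \<open>auto intro: mono_onD\<close>)
      thus ?thesis using xy by (simp add: mult.commute)
    qed
    have i2: "integral {x..y} q \<le> q y * (y - x)"
    proof -
      have "integral {x..y} q \<le> integral {x..y} (\<lambda>_. q y)"
        by (rule integral_le) (use qint[of x y] xy qm in \<open>auto intro: mono_onD\<close>)
      thus ?thesis using xy by (simp add: mult.commute)
    qed
    have "x \<in> {0..1}" "y \<in> {0..1}" using xy by auto
    note lo = mech_u_lo[OF M IC IR this] and hi = mech_u_hi[OF M IC IR this]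
    show ?thesis unfolding V_def comb using lo hi i1 i2 by (simp add: abs_le_iff algebra_simps)
  qed
  have tele: "\<bar>V (real k * (w / real n)) - V 0\<bar> \<le> (w / real n) * (q (real k * (w / real n)) - q 0)"
    if "n > 0" "k \<le> n" for n k
    using that(2)
  proof (induction k)
    case 0 thus ?case by simp
  next
    case (Suc k)
    define h where "h = w / real n"
    have h0: "h \<ge> 0" using w unfolding h_def by auto
    have kh: "real (Suc k) * h \<le> 1"
    proof -
      have "real (Suc k) * h \<le> real n * h" using Suc.prems h0 by (intro mult_right_mono) auto
      also have "real n * h = w" using \<open>n > 0\<close> unfolding h_def by simp
      finally show ?thesis using w by simp
    qed
    have s: "\<bar>V (real (Suc k) * h) - V (real k * h)\<bar> \<le> (q (real (Suc k) * h) - q (real k * h)) * h"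
      using step[of "real k * h" "real (Suc k) * h"] h0 kh by (simp add: algebra_simps)
    have IH: "\<bar>V (real k * h) - V 0\<bar> \<le> h * (q (real k * h) - q 0)" using Suc unfolding h_def by simp
    have "\<bar>V (real (Suc k) * h) - V 0\<bar> \<le> h * (q (real (Suc k) * h) - q 0)"
      using s IH by (simp add: abs_le_iff algebra_simps)
    thus ?case unfolding h_def .
  qed
  have "V w - V 0 = 0"
  proof (rule small_imp_zero[where C = qbar])
    fix n :: nat assume n: "n > 0"
    have "\<bar>V w - V 0\<bar> \<le> (w / real n) * (q w - q 0)"
      using tele[OF n order_refl] n by simp
    also have "\<dots> \<le> (1 / real n) * qbar"
    proof (rule mult_mono)
      show "w / real n \<le> 1 / real n" using w n by (simp add: divide_right_mono)
      show "q w - q 0 \<le> qbar" using qb[of w] qb[of 0] w by auto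
      show "0 \<le> 1 / real n" by simp
      show "0 \<le> q w - q 0" using qm w by (auto intro: mono_onD)
    qed
    finally show "\<bar>V w - V 0\<bar> \<le> qbar / real n" by simp
  qed
  thus ?thesis unfolding V_def by simp
qed

lemma cdf01_basic:
  fixes G :: "real \<Rightarrow> real"
  assumes G: "is_cdf01 G"
  shows cdf01_mono: "\<And>x y. x \<le> y \<Longrightarrow> G x \<le> G y"
    and cdf01_rc: "\<And>a. continuous (at_right a) G"
    and cdf01_bot: "(G \<longlongrightarrow> 0) at_bot"
    and cdf01_top: "(G \<longlongrightarrow> 1) at_top"
    and cdf01_ge0: "\<And>x. 0 \<le> G x"
    and cdf01_le1: "\<And>x. G x \<le> 1"
proof -
  show m: "G x \<le> G y" if "x \<le> y" for x y using G that unfolding is_cdf01_def mono_def by blast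
  show "continuous (at_right a) G" for a using G unfolding is_cdf01_def by blast
  show "(G \<longlongrightarrow> 0) at_bot"
  proof (rule tendsto_eventually)
    show "\<forall>\<^sub>F x in at_bot. G x = 0"
      unfolding eventually_at_bot_linorder using G unfolding is_cdf01_def by (intro exI[of _ "-1"]) auto
  qed
  show "(G \<longlongrightarrow> 1) at_top"
  proof (rule tendsto_eventually)
    show "\<forall>\<^sub>F x in at_top. G x = 1"
      unfolding eventually_at_top_linorder using G unfolding is_cdf01_def by (intro exI[of _ "1"]) auto
  qed
  show "0 \<le> G x" for x
  proof (cases "x < 0")
    case True thus ?thesis using G unfolding is_cdf01_def by simp
  next
    case False thus ?thesis using m[of "-1" x] G unfolding is_cdf01_def by simp
  qed
  show "G x \<le> 1" for x
  proof (cases "x \<ge> 1")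
    case True thus ?thesis using G unfolding is_cdf01_def by simp
  next
    case False thus ?thesis using m[of x 1] G unfolding is_cdf01_def by simp
  qed
qed

lemma cdf01_measure:
  fixes G :: "real \<Rightarrow> real"
  assumes G: "is_cdf01 G"
  shows cdf01_distr: "real_distribution (interval_measure G)"
    and cdf01_Iic: "\<And>x. measure (interval_measure G) {..x} = G x"
    and cdf01_eIic: "\<And>x. emeasure (interval_measure G) {..x} = G x"
    and cdf01_Ioc: "\<And>a b. a \<le> b \<Longrightarrow> emeasure (interval_measure G) {a<..b} = G b - G a"
    and cdf01_AE: "AE w in interval_measure G. w \<in> {0..1}"
proof -
  note b = cdf01_basic[OF G]
  show "real_distribution (interval_measure G)"
    by (rule real_distribution_interval_measure) (use b in auto)
  show "measure (interval_measure G) {..x} = G x" for x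
    by (rule measure_interval_measure_Iic) (use b in auto)
  show eI: "emeasure (interval_measure G) {..x} = G x" for x
    by (rule emeasure_interval_measure_Iic) (use b in auto)
  show eIoc: "emeasure (interval_measure G) {a<..b} = G b - G a" if "a \<le> b" for a b
    by (rule emeasure_interval_measure_Ioc) (use b that in auto)
  have n1: "emeasure (interval_measure G) (\<Union>n::nat. {..- 1 / real (Suc n)}) = 0"
  proof (rule emeasure_UN_eq_0)
    show "emeasure (interval_measure G) {..- 1 / real (Suc n)} = 0" for n
    proof -
      have "- 1 / real (Suc n) < 0" by simp
      hence "G (- 1 / real (Suc n)) = 0" using G unfolding is_cdf01_def by blast
      thus ?thesis using eI by simp
    qed
  qed auto
  have u1: "(\<Union>n::nat. {..- 1 / real (Suc n)}) = {..<(0::real)}"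
  proof (intro set_eqI iffI)
    fix x :: real assume "x \<in> {..<0}"
    hence "x < 0" by simp
    then obtain n :: nat where "1 / real (Suc n) < - x"
      using reals_Archimedean[of "-x"] by (auto simp: inverse_eq_divide)
    thus "x \<in> (\<Union>n::nat. {..- 1 / real (Suc n)})" by (auto intro!: exI[of _ n])
  next
    fix x :: real assume "x \<in> (\<Union>n::nat. {..- 1 / real (Suc n)})"
    then obtain n :: nat where "x \<le> - 1 / real (Suc n)" by auto
    moreover have "- 1 / real (Suc n) < 0" by simp
    ultimately show "x \<in> {..<0}" by (metis lessThan_iff order_le_less_trans)
  qed
  have n2: "emeasure (interval_measure G) (\<Union>n::nat. {1<..1 + real n}) = 0"
  proof (rule emeasure_UN_eq_0)
    show "emeasure (interval_measure G) {1<..1 + real n} = 0" for n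
    proof -
      have "G (1 + real n) = 1" "G 1 = 1" using G unfolding is_cdf01_def by auto
      thus ?thesis using eIoc[of 1 "1 + real n"] by simp
    qed
  qed auto
  have u2: "(\<Union>n::nat. {1<..1 + real n}) = {(1::real)<..}"
  proof (intro set_eqI iffI)
    fix x :: real assume "x \<in> {1<..}"
    then obtain n :: nat where "x - 1 < real n" using reals_Archimedean2 by blast
    thus "x \<in> (\<Union>n::nat. {1<..1 + real n})" using \<open>x \<in> {1<..}\<close> by (auto intro!: exI[of _ n])
  qed auto
  have null: "{..<0} \<union> {1<..} \<in> null_sets (interval_measure G)"
    using n1 n2 unfolding u1 u2 by (intro null_sets.Un null_setsI) auto
  show "AE w in interval_measure G. w \<in> {0..1}"
    by (rule AE_I'[OF null]) auto
qed

lemma mono_clamp: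
  fixes f :: "real \<Rightarrow> real"
  assumes "mono_on {0..1} f"
  shows "mono (\<lambda>w. f (max 0 (min 1 w)))"
  by (rule monoI, rule mono_onD[OF assms]) auto

lemma borel_clamp:
  fixes f :: "real \<Rightarrow> real"
  assumes "mono_on {0..1} f"
  shows "(\<lambda>w. f (max 0 (min 1 w))) \<in> borel_measurable borel"
  by (rule borel_measurable_mono[OF mono_clamp[OF assms]])

lemma expect_as_integral:
  fixes G \<phi> \<psi> :: "real \<Rightarrow> real"
  assumes G: "is_cdf01 G" and meas: "\<phi> \<in> borel_measurable borel"
    and bnd: "\<And>w. w \<in> {0..1} \<Longrightarrow> \<bar>\<phi> w\<bar> \<le> B"
    and eq: "\<And>w. w \<in> {0..1} \<Longrightarrow> \<psi> w = \<phi> w"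
  shows "expect G \<psi> = integral\<^sup>L (interval_measure G) \<phi>"
    and "integrable (interval_measure G) \<phi>"
proof -
  interpret real_distribution "interval_measure G" by (rule cdf01_distr[OF G])
  note AE01 = cdf01_AE[OF G]
  have "expect G \<psi> = (LINT w|interval_measure G. indicator {0..1} w *\<^sub>R \<psi> w)"
    unfolding expect_def set_lebesgue_integral_def ..
  also have "(\<lambda>w. indicator {0..1} w *\<^sub>R \<psi> w) = (\<lambda>w. indicator {0..1} w *\<^sub>R \<phi> w)"
    by (rule ext) (auto simp: indicator_def eq)
  also have "(LINT w|interval_measure G. indicator {0..1} w *\<^sub>R \<phi> w) = integral\<^sup>L (interval_measure G) \<phi>"
  proof (rule integral_cong_AE)
    show "(\<lambda>w. indicator {0..1} w *\<^sub>R \<phi> w) \<in> borel_measurable (interval_measure G)"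
      using meas by (simp add: measurable_cong_sets[OF sets_interval_measure refl])
    show "\<phi> \<in> borel_measurable (interval_measure G)"
      using meas by (simp add: measurable_cong_sets[OF sets_interval_measure refl])
    show "AE w in interval_measure G. indicator {0..1} w *\<^sub>R \<phi> w = \<phi> w"
      using AE01 by eventually_elim auto
  qed
  finally show "expect G \<psi> = integral\<^sup>L (interval_measure G) \<phi>" .
  show "integrable (interval_measure G) \<phi>"
  proof (rule integrable_const_bound)
    show "AE x in interval_measure G. norm (\<phi> x) \<le> B"
      using AE01 by eventually_elim (use bnd in auto)
    show "\<phi> \<in> borel_measurable (interval_measure G)"
      using meas by (simp add: measurable_cong_sets[OF sets_interval_measure refl])
  qed
qed

lemma integral_eq_by_cdf:
  fixes G1 G2 \<phi> :: "real \<Rightarrow> real"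
  assumes G1: "is_cdf01 G1" and G2: "is_cdf01 G2" and meas: "\<phi> \<in> borel_measurable borel"
    and eq: "\<And>y. measure (interval_measure G1) {w. \<phi> w \<le> y} = measure (interval_measure G2) {w. \<phi> w \<le> y}"
  shows "integral\<^sup>L (interval_measure G1) \<phi> = integral\<^sup>L (interval_measure G2) \<phi>"
proof -
  have m1: "\<phi> \<in> borel_measurable (interval_measure G1)"
    using meas by (simp add: measurable_cong_sets[OF sets_interval_measure refl])
  have m2: "\<phi> \<in> borel_measurable (interval_measure G2)"
    using meas by (simp add: measurable_cong_sets[OF sets_interval_measure refl])
  have d1: "real_distribution (distr (interval_measure G1) borel \<phi>)"
    using cdf01_distr[OF G1] m1 by (intro prob_space.real_distribution_distr) (auto simp: real_distribution_def)
  have d2: "real_distribution (distr (interval_measure G2) borel \<phi>)"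
    using cdf01_distr[OF G2] m2 by (intro prob_space.real_distribution_distr) (auto simp: real_distribution_def)
  have c: "cdf (distr (interval_measure G1) borel \<phi>) = cdf (distr (interval_measure G2) borel \<phi>)"
  proof
    fix y
    have "cdf (distr (interval_measure G1) borel \<phi>) y = measure (interval_measure G1) {w. \<phi> w \<le> y}"
      unfolding cdf_def2 using m1 by (subst measure_distr) (auto simp: vimage_def)
    also have "\<dots> = measure (interval_measure G2) {w. \<phi> w \<le> y}" by (rule eq)
    also have "\<dots> = cdf (distr (interval_measure G2) borel \<phi>) y"
      unfolding cdf_def2 using m2 by (subst measure_distr) (auto simp: vimage_def)
    finally show "cdf (distr (interval_measure G1) borel \<phi>) y = cdf (distr (interval_measure G2) borel \<phi>) y" .
  qed
  have D: "distr (interval_measure G1) borel \<phi> = distr (interval_measure G2) borel \<phi>"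
    by (rule cdf_unique[OF d1 d2 c])
  have "integral\<^sup>L (interval_measure G1) \<phi> = integral\<^sup>L (distr (interval_measure G1) borel \<phi>) (\<lambda>x. x)"
    using m1 by (subst integral_distr) auto
  also have "\<dots> = integral\<^sup>L (distr (interval_measure G2) borel \<phi>) (\<lambda>x. x)" using D by simp
  also have "\<dots> = integral\<^sup>L (interval_measure G2) \<phi>"
    using m2 by (subst integral_distr) auto
  finally show ?thesis .
qed

lemma expect_indef:
  fixes G g :: "real \<Rightarrow> real" and B :: real
  assumes G: "is_cdf01 G" and gm: "mono_on {0..1} g"
    and g0: "\<And>w. w \<in> {0..1} \<Longrightarrow> 0 \<le> g w" and gB: "\<And>w. w \<in> {0..1} \<Longrightarrow> g w \<le> B"
  shows "expect G (\<lambda>w. integral {0..w} g) = integral {0..1} (\<lambda>s. g s * (1 - G s))"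
proof -
  define M where "M = interval_measure G"
  interpret real_distribution M unfolding M_def by (rule cdf01_distr[OF G])
  note Gb = cdf01_basic[OF G]
  have B0: "0 \<le> B" using g0[of 0] gB[of 0] by simp
  define gh where "gh w = g (max 0 (min 1 w))" for w
  have gh_meas[measurable]: "gh \<in> borel_measurable borel" unfolding gh_def by (rule borel_clamp[OF gm])
  have gh0: "0 \<le> gh w" for w unfolding gh_def by (rule g0) auto
  have ghB: "gh w \<le> B" for w unfolding gh_def by (rule gB) auto
  have gh_eq: "gh w = g w" if "w \<in> {0..1}" for w using that unfolding gh_def by simp
  have ghm: "mono_on {0..1} gh"
    by (rule mono_onI) (simp add: gh_eq mono_onD[OF gm])
  have ghint: "gh integrable_on {a..b}" if "0 \<le> a" "b \<le> 1" for a b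
    by (rule integrable_on_mono_on, rule mono_on_subset[OF ghm]) (use that in auto)
  define \<Phi> where "\<Phi> w = integral {0..w} g" for w
  have \<Phi>gh: "\<Phi> w = integral {0..w} gh" if "w \<in> {0..1}" for w
    unfolding \<Phi>_def by (rule integral_cong) (use that gh_eq in auto)
  have \<Phi>m: "mono_on {0..1} \<Phi>"
  proof (rule mono_onI)
    fix x y :: real assume xy: "x \<in> {0..1}" "y \<in> {0..1}" "x \<le> y"
    have "integral {0..y} gh = integral {0..x} gh + integral {x..y} gh"
      using Henstock_Kurzweil_Integration.integral_combine[where a=0 and c=x and b=y and f=gh] ghint[of 0 y] xy by simp
    moreover have "integral {x..y} gh \<ge> 0" by (rule integral_nonneg) (use ghint[of x y] xy gh0 in auto)
    ultimately show "\<Phi> x \<le> \<Phi> y" using \<Phi>gh xy by simp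
  qed
  have \<Phi>b: "0 \<le> \<Phi> w \<and> \<Phi> w \<le> B" if "w \<in> {0..1}" for w
  proof -
    have "integral {0..w} gh \<ge> 0" by (rule integral_nonneg) (use ghint[of 0 w] that gh0 in auto)
    moreover have "integral {0..w} gh \<le> integral {0..w} (\<lambda>_. B)"
      by (rule integral_le) (use ghint[of 0 w] that ghB in auto)
    moreover have "integral {0..w} (\<lambda>_. B) = w * B" using that by simp
    moreover have "w * B \<le> B" using that B0 by (simp add: mult_left_le_one_le)
    ultimately have "0 \<le> integral {0..w} gh \<and> integral {0..w} gh \<le> B" by linarith
    thus ?thesis using \<Phi>gh[OF that] by simp
  qed
  define \<Phi>h where "\<Phi>h w = \<Phi> (max 0 (min 1 w))" for w
  have \<Phi>h_meas[measurable]: "\<Phi>h \<in> borel_measurable borel" unfolding \<Phi>h_def by (rule borel_clamp[OF \<Phi>m])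
  have \<Phi>h0: "0 \<le> \<Phi>h w" for w unfolding \<Phi>h_def using \<Phi>b by auto
  have EI: "expect G \<Phi> = integral\<^sup>L M \<Phi>h" "integrable M \<Phi>h"
  proof -
    have b1: "\<bar>\<Phi>h w\<bar> \<le> B" if "w \<in> {0..1}" for w
      using \<Phi>b[OF that] that unfolding \<Phi>h_def by simp
    have b2: "\<Phi> w = \<Phi>h w" if "w \<in> {0..1}" for w
      using that unfolding \<Phi>h_def by simp
    show "expect G \<Phi> = integral\<^sup>L M \<Phi>h" "integrable M \<Phi>h"
      using expect_as_integral[OF G \<Phi>h_meas b1 b2] unfolding M_def by blast+
  qed
  have E0: "expect G \<Phi> \<ge> 0" using EI(1) \<Phi>h0 by (simp add: integral_nonneg)
  define f where "f p = (if 0 \<le> snd p \<and> snd p < fst p \<and> fst p \<le> 1 then ennreal (gh (snd p)) else 0)" for p :: "real \<times> real"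
  have f_meas: "f \<in> borel_measurable (M \<Otimes>\<^sub>M lborel)"
  proof -
    have fb: "f \<in> borel_measurable (borel \<Otimes>\<^sub>M borel)" unfolding f_def by measurable
    have S: "sets (M \<Otimes>\<^sub>M lborel) = sets (borel \<Otimes>\<^sub>M borel)"
      by (rule sets_pair_measure_cong) (auto simp: M_def)
    show ?thesis using fb unfolding measurable_cong_sets[OF S refl] .
  qed
  have PS: "pair_sigma_finite M lborel"
    by (intro pair_sigma_finite.intro prob_space_imp_sigma_finite sigma_finite_lborel) (rule prob_space_axioms)
  have inner1: "(\<integral>\<^sup>+ s. f (w, s) \<partial>lborel) = ennreal (\<Phi>h w)" if "w \<in> {0..1}" for w
  proof -
    have "(\<integral>\<^sup>+ s. f (w, s) \<partial>lborel) = (\<integral>\<^sup>+ s. ennreal (if s \<in> {0..w} then gh s else 0) \<partial>lborel)"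
    proof (rule nn_integral_cong_AE)
      show "AE s in lborel. f (w, s) = ennreal (if s \<in> {0..w} then gh s else 0)"
        using AE_lborel_singleton[of w] by eventually_elim (use that in \<open>auto simp: f_def\<close>)
    qed
    also have "\<dots> = ennreal (integral {0..w} gh)"
    proof (rule nn_integral_has_integral_lborel)
      show "(\<lambda>s. if s \<in> {0..w} then gh s else 0) \<in> borel_measurable borel" by measurable
      show "0 \<le> (if s \<in> {0..w} then gh s else 0)" for s using gh0 by simp
      show "((\<lambda>s. if s \<in> {0..w} then gh s else 0) has_integral integral {0..w} gh) UNIV"
        unfolding has_integral_restrict_UNIV using ghint[of 0 w] that by (simp add: integrable_integral)
    qed
    also have "integral {0..w} gh = \<Phi>h w" using \<Phi>gh[OF that] that unfolding \<Phi>h_def by simp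
    finally show ?thesis .
  qed
  have inner2: "(\<integral>\<^sup>+ w. f (w, s) \<partial>M) = ennreal (if s \<in> {0..1} then gh s * (1 - G s) else 0)" if "s \<noteq> 1" for s
  proof (cases "0 \<le> s \<and> s < 1")
    case True
    have "(\<integral>\<^sup>+ w. f (w, s) \<partial>M) = (\<integral>\<^sup>+ w. ennreal (gh s) * indicator {s<..1} w \<partial>M)"
      by (rule nn_integral_cong) (use True in \<open>auto simp: f_def indicator_def\<close>)
    also have "\<dots> = ennreal (gh s) * emeasure M {s<..1}"
      using nn_integral_cmult_indicator[of "{s<..1}" M "ennreal (gh s)"] by (simp add: M_def)
    also have "emeasure M {s<..1} = ennreal (1 - G s)"
      using cdf01_Ioc[OF G, of s 1] True G unfolding M_def is_cdf01_def by simp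
    also have "ennreal (gh s) * ennreal (1 - G s) = ennreal (gh s * (1 - G s))"
      using gh0 Gb(6)[of s] by (simp add: ennreal_mult)
    finally show ?thesis using True by simp
  next
    case False
    have "(\<integral>\<^sup>+ w. f (w, s) \<partial>M) = (\<integral>\<^sup>+ w. 0 \<partial>M)"
      by (rule nn_integral_cong) (use False in \<open>auto simp: f_def\<close>)
    thus ?thesis using False that by auto
  qed
  have m2: "mono_on {0..1} (\<lambda>s. gh s * G s)"
  proof (rule mono_onI)
    fix x y :: real assume "x \<in> {0..1}" "y \<in> {0..1}" "x \<le> y"
    thus "gh x * G x \<le> gh y * G y"
      using mono_onD[OF ghm] Gb(1)[of x y] gh0 Gb(5) by (intro mult_mono) auto
  qed
  have "(\<lambda>s. gh s - gh s * G s) integrable_on {0..1}"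
    by (intro integrable_diff integrable_on_mono_on m2 ghm)
  hence gGint: "(\<lambda>s. gh s * (1 - G s)) integrable_on {0..1}" by (simp add: algebra_simps)
  have "ennreal (expect G \<Phi>) = (\<integral>\<^sup>+ w. ennreal (\<Phi>h w) \<partial>M)"
    using EI \<Phi>h0 by (simp add: nn_integral_eq_integral)
  also have "\<dots> = (\<integral>\<^sup>+ w. (\<integral>\<^sup>+ s. f (w, s) \<partial>lborel) \<partial>M)"
  proof (rule nn_integral_cong_AE)
    show "AE w in M. ennreal (\<Phi>h w) = (\<integral>\<^sup>+ s. f (w, s) \<partial>lborel)"
      using cdf01_AE[OF G] unfolding M_def[symmetric] by eventually_elim (simp add: inner1)
  qed
  also have "\<dots> = (\<integral>\<^sup>+ s. (\<integral>\<^sup>+ w. f (w, s) \<partial>M) \<partial>lborel)"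
    using pair_sigma_finite.Fubini[OF PS f_meas] by simp
  also have "\<dots> = (\<integral>\<^sup>+ s. ennreal (if s \<in> {0..1} then gh s * (1 - G s) else 0) \<partial>lborel)"
  proof (rule nn_integral_cong_AE)
    show "AE s in lborel. (\<integral>\<^sup>+ w. f (w, s) \<partial>M) = ennreal (if s \<in> {0..1} then gh s * (1 - G s) else 0)"
      using AE_lborel_singleton[of 1] by eventually_elim (simp add: inner2)
  qed
  also have "\<dots> = ennreal (integral {0..1} (\<lambda>s. gh s * (1 - G s)))"
  proof (rule nn_integral_has_integral_lborel)
    have Gm: "G \<in> borel_measurable borel" by (rule borel_measurable_mono) (use Gb(1) in \<open>auto simp: mono_def\<close>)
    show "(\<lambda>s. if s \<in> {0..1} then gh s * (1 - G s) else 0) \<in> borel_measurable borel" using Gm by measurable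
    show "0 \<le> (if s \<in> {0..1} then gh s * (1 - G s) else 0)" for s using gh0 Gb(6)[of s] by simp
    show "((\<lambda>s. if s \<in> {0..1} then gh s * (1 - G s) else 0) has_integral integral {0..1} (\<lambda>s. gh s * (1 - G s))) UNIV"
      unfolding has_integral_restrict_UNIV using gGint by (simp add: integrable_integral)
  qed
  finally have "ennreal (expect G \<Phi>) = ennreal (integral {0..1} (\<lambda>s. gh s * (1 - G s)))" .
  moreover have "integral {0..1} (\<lambda>s. gh s * (1 - G s)) = integral {0..1} (\<lambda>s. g s * (1 - G s))"
    by (rule integral_cong) (simp add: gh_eq)
  moreover have "integral {0..1} (\<lambda>s. g s * (1 - G s)) \<ge> 0"
  proof -
    have "integral {0..1} (\<lambda>s. gh s * (1 - G s)) \<ge> 0"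
      by (rule integral_nonneg[OF gGint]) (use gh0 Gb(6) in auto)
    with \<open>integral {0..1} (\<lambda>s. gh s * (1 - G s)) = _\<close> show ?thesis by simp
  qed
  ultimately show ?thesis using E0 unfolding \<Phi>_def[abs_def] by simp
qed

lemma expect_cong:
  assumes "\<And>w. w \<in> {0..1} \<Longrightarrow> f w = g w"
  shows "expect G f = expect G g"
proof -
  have "(\<lambda>w. indicator {0..1} w *\<^sub>R f w) = (\<lambda>w. indicator {0..1} w *\<^sub>R g w)"
    by (rule ext) (auto simp: indicator_def assms)
  thus ?thesis unfolding expect_def set_lebesgue_integral_def by simp
qed

lemma prod_cdf_integrable:
  fixes G q :: "real \<Rightarrow> real"
  assumes G: "is_cdf01 G" and qm: "mono_on {0..1} q" and q0: "\<And>w. w \<in> {0..1} \<Longrightarrow> 0 \<le> q w"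
  shows "(\<lambda>s. q s * G s) integrable_on {0..1}"
proof (rule integrable_on_mono_on, rule mono_onI)
  note Gb = cdf01_basic[OF G]
  fix x y :: real assume "x \<in> {0..1}" "y \<in> {0..1}" "x \<le> y"
  thus "q x * G x \<le> q y * G y"
    using mono_onD[OF qm] Gb(1)[of x y] q0 Gb(5) by (intro mult_mono) auto
qed

lemma cdf_integrable:
  fixes G :: "real \<Rightarrow> real"
  assumes G: "is_cdf01 G"
  shows "G integrable_on {a..b}"
  by (rule integrable_on_mono_on) (use cdf01_basic(1)[OF G] in \<open>auto simp: mono_on_def\<close>)

lemma expect_u:
  fixes q t G :: "real \<Rightarrow> real" and qbar :: real
  assumes M: "mechanism qbar q t" and IC: "B_IC q t" and IR: "B_IR q t" and G: "is_cdf01 G"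
  shows "expect G (\<lambda>w. w * q w - t w) = - t 0 + integral {0..1} (\<lambda>s. q s * (1 - G s))"
proof -
  note qm = mech_q_mono[OF M IC IR] and qb = mech_q_bnd[OF M IC IR] and tb = mech_t_bnd[OF M IC IR]
  define u where "u w = w * q w - t w" for w
  have um: "mono_on {0..1} u"
  proof (rule mono_onI)
    fix x y :: real assume xy: "x \<in> {0..1}" "y \<in> {0..1}" "x \<le> y"
    have "q x * (y - x) \<ge> 0" using qb[OF xy(1)] xy by simp
    thus "u x \<le> u y" using mech_u_lo[OF M IC IR xy(1,2)] unfolding u_def by simp
  qed
  have ub: "\<bar>u w\<bar> \<le> 2 * qbar" if "w \<in> {0..1}" for w
  proof -
    have "w * q w \<le> 1 * q w" using that qb[OF that] by (intro mult_right_mono) auto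
    moreover have "w * q w \<ge> 0" using that qb[OF that] by simp
    ultimately show ?thesis using qb[OF that] tb[OF that] unfolding u_def by (simp add: abs_le_iff)
  qed
  define uh where "uh w = u (max 0 (min 1 w))" for w
  have uh_meas: "uh \<in> borel_measurable borel" unfolding uh_def by (rule borel_clamp[OF um])
  have uhb: "\<bar>uh w\<bar> \<le> 2 * qbar" if "w \<in> {0..1}" for w using ub[OF that] that unfolding uh_def by simp
  have uhe: "u w = uh w" if "w \<in> {0..1}" for w using that unfolding uh_def by simp
  have E1: "expect G u = integral\<^sup>L (interval_measure G) uh" and I1: "integrable (interval_measure G) uh"
    using expect_as_integral[OF G uh_meas uhb uhe] by blast+
  have uh2_meas: "(\<lambda>w. uh w + t 0) \<in> borel_measurable borel" using uh_meas by measurable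
  have uh2b: "\<bar>uh w + t 0\<bar> \<le> 3 * qbar" if "w \<in> {0..1}" for w
    using uhb[OF that] tb[of 0] by (simp add: abs_le_iff)
  have uh2e: "integral {0..w} q = uh w + t 0" if "w \<in> {0..1}" for w
    using u_repr[OF M IC IR that] uhe[OF that] unfolding u_def by simp
  have E2: "expect G (\<lambda>w. integral {0..w} q) = integral\<^sup>L (interval_measure G) (\<lambda>w. uh w + t 0)"
    using expect_as_integral(1)[OF G uh2_meas uh2b uh2e] .
  interpret real_distribution "interval_measure G" by (rule cdf01_distr[OF G])
  have "integral\<^sup>L (interval_measure G) (\<lambda>w. uh w + t 0) = integral\<^sup>L (interval_measure G) uh + t 0"
    using I1 prob_space by (simp add: space_interval_measure)
  moreover have "expect G (\<lambda>w. integral {0..w} q) = integral {0..1} (\<lambda>s. q s * (1 - G s))"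
    by (rule expect_indef[OF G qm, of qbar]) (use qb in auto)
  ultimately have "expect G u = - t 0 + integral {0..1} (\<lambda>s. q s * (1 - G s))" using E1 E2 by simp
  thus ?thesis unfolding u_def[abs_def] .
qed

lemma co_piece:
  fixes F0 G q :: "real \<Rightarrow> real"
  assumes F0: "is_cdf01 F0" and G: "is_cdf01 G" and qm: "mono_on {0..1} q"
    and ab: "0 \<le> a" "a \<le> b" "b \<le> 1"
  obtains c where "c \<in> {a..b}"
    "integral {a..b} (\<lambda>s. q s * (F0 s - G s)) =
       q b * integral {0..b} (\<lambda>s. F0 s - G s) - q a * integral {0..a} (\<lambda>s. F0 s - G s)
       - (q b - q a) * integral {0..c} (\<lambda>s. F0 s - G s)"
proof -
  define D where "D s = F0 s - G s" for s
  have Dint: "D integrable_on {x..y}" for x y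
    unfolding D_def by (intro integrable_diff cdf_integrable F0 G)
  obtain c where c: "c \<in> {a..b}"
    "integral {a..b} (\<lambda>x. q x * D x) = q a * integral {a..c} D + q b * integral {c..b} D"
    by (rule second_mean_value_theorem[OF Dint ab(2), of q])
       (use ab in \<open>auto intro: mono_onD[OF qm]\<close>)
  have c1: "integral {0..c} D = integral {0..a} D + integral {a..c} D"
    using Henstock_Kurzweil_Integration.integral_combine[where a=0 and c=a and b=c and f=D] Dint c(1) ab by simp
  have c2: "integral {0..b} D = integral {0..c} D + integral {c..b} D"
    using Henstock_Kurzweil_Integration.integral_combine[where a=0 and c=c and b=b and f=D] Dint c(1) ab by simp
  show ?thesis
    by (rule that[OF c(1)]) (use c(2) c1 c2 in \<open>simp add: D_def[abs_def] algebra_simps\<close>)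
qed

lemma co_main:
  fixes F0 G q :: "real \<Rightarrow> real"
  assumes F0: "is_cdf01 F0" and G: "is_cdf01 G" and qm: "mono_on {0..1} q"
    and q0: "\<And>w. w \<in> {0..1} \<Longrightarrow> 0 \<le> q w"
    and Ipos: "\<And>x. x \<in> {0..1} \<Longrightarrow> integral {0..x} (\<lambda>s. F0 s - G s) \<ge> 0"
    and I1: "integral {0..1} (\<lambda>s. F0 s - G s) = 0"
  shows co_le: "integral {0..1} (\<lambda>s. q s * (F0 s - G s)) \<le> 0"
    and co_eq: "integral {0..1} (\<lambda>s. q s * (F0 s - G s)) = 0 \<Longrightarrow> 0 \<le> a \<Longrightarrow> a < b \<Longrightarrow> b \<le> 1
         \<Longrightarrow> q a < q b \<Longrightarrow> \<exists>c\<in>{a..b}. integral {0..c} (\<lambda>s. F0 s - G s) = 0"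
proof -
  define I where "I x = integral {0..x} (\<lambda>s. F0 s - G s)" for x
  have I0: "I 0 = 0" unfolding I_def by simp
  have qmono: "q x \<le> q y" if "0 \<le> x" "x \<le> y" "y \<le> 1" for x y
    using that by (intro mono_onD[OF qm]) auto
  have term_nonneg: "(q y - q x) * I c \<ge> 0" if "0 \<le> x" "x \<le> y" "y \<le> 1" "c \<in> {x..y}" for x y c
    using qmono[OF that(1-3)] Ipos[of c] that unfolding I_def by simp
  have qDint: "(\<lambda>s. q s * (F0 s - G s)) integrable_on {0..1}"
  proof -
    have "(\<lambda>s. q s * F0 s - q s * G s) integrable_on {0..1}"
      by (intro integrable_diff prod_cdf_integrable F0 G qm q0)
    thus ?thesis by (simp add: algebra_simps)
  qed
  show "integral {0..1} (\<lambda>s. q s * (F0 s - G s)) \<le> 0"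
  proof -
    obtain c where c: "c \<in> {0..1}"
      "integral {0..1} (\<lambda>s. q s * (F0 s - G s)) = q 1 * I 1 - q 0 * I 0 - (q 1 - q 0) * I c"
      using co_piece[OF F0 G qm, of 0 1] unfolding I_def by auto
    show ?thesis using c term_nonneg[of 0 1 c] I0 I1 unfolding I_def by simp
  qed
  assume eq0: "integral {0..1} (\<lambda>s. q s * (F0 s - G s)) = 0" and ab: "0 \<le> a" "a < b" "b \<le> 1" and qab: "q a < q b"
  obtain c1 where c1: "c1 \<in> {0..a}"
      "integral {0..a} (\<lambda>s. q s * (F0 s - G s)) = q a * I a - q 0 * I 0 - (q a - q 0) * I c1"
    using co_piece[OF F0 G qm, of 0 a] ab unfolding I_def by auto
  obtain c2 where c2: "c2 \<in> {a..b}"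
      "integral {a..b} (\<lambda>s. q s * (F0 s - G s)) = q b * I b - q a * I a - (q b - q a) * I c2"
    using co_piece[OF F0 G qm, of a b] ab unfolding I_def by auto
  obtain c3 where c3: "c3 \<in> {b..1}"
      "integral {b..1} (\<lambda>s. q s * (F0 s - G s)) = q 1 * I 1 - q b * I b - (q 1 - q b) * I c3"
    using co_piece[OF F0 G qm, of b 1] ab unfolding I_def by auto
  have s1: "integral {0..b} (\<lambda>s. q s * (F0 s - G s)) = integral {0..a} (\<lambda>s. q s * (F0 s - G s)) + integral {a..b} (\<lambda>s. q s * (F0 s - G s))"
    using Henstock_Kurzweil_Integration.integral_combine[where a=0 and c=a and b=b and f="\<lambda>s. q s * (F0 s - G s)"]
      integrable_subinterval_real[OF qDint, of 0 b] ab by simp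
  have s2: "integral {0..1} (\<lambda>s. q s * (F0 s - G s)) = integral {0..b} (\<lambda>s. q s * (F0 s - G s)) + integral {b..1} (\<lambda>s. q s * (F0 s - G s))"
    using Henstock_Kurzweil_Integration.integral_combine[where a=0 and c=b and b=1 and f="\<lambda>s. q s * (F0 s - G s)"]
      qDint ab by simp
  have t1: "(q a - q 0) * I c1 \<ge> 0" using term_nonneg[of 0 a c1] c1 ab by simp
  have t2: "(q b - q a) * I c2 \<ge> 0" using term_nonneg[of a b c2] c2 ab by simp
  have t3: "(q 1 - q b) * I c3 \<ge> 0" using term_nonneg[of b 1 c3] c3 ab by simp
  have "(q a - q 0) * I c1 + (q b - q a) * I c2 + (q 1 - q b) * I c3 = 0"
    using eq0 s1 s2 c1(2) c2(2) c3(2) I0 I1 unfolding I_def by simp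
  hence "(q b - q a) * I c2 = 0" using t1 t2 t3 by linarith
  hence "I c2 = 0" using qab by simp
  thus "\<exists>c\<in>{a..b}. integral {0..c} (\<lambda>s. F0 s - G s) = 0" using c2(1) unfolding I_def by blast
qed

lemma cont_right_bound:
  fixes F :: "real \<Rightarrow> real"
  assumes Fc: "continuous_on {0..1} F" and z: "z \<in> {0..1}" "z < 1"
    and bnd: "\<And>x. z < x \<Longrightarrow> x \<le> 1 \<Longrightarrow> c \<le> F x"
  shows "c \<le> F z"
proof (rule ccontr)
  assume "\<not> c \<le> F z"
  hence e: "c - F z > 0" by simp
  obtain d where d: "d > 0" "\<And>x. x \<in> {0..1} \<Longrightarrow> dist x z < d \<Longrightarrow> dist (F x) (F z) < c - F z"
    using Fc z(1) e unfolding continuous_on_iff by metis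
  define x where "x = min 1 (z + d / 2)"
  have x: "z < x" "x \<le> 1" "x \<in> {0..1}" "dist x z < d" using z d(1) unfolding x_def by (auto simp: dist_real_def)
  have "dist (F x) (F z) < c - F z" using d(2)[OF x(3,4)] .
  moreover have "c \<le> F x" using bnd[OF x(1,2)] .
  ultimately show False by (simp add: dist_real_def abs_if split: if_splits)
qed

lemma cont_left_bound:
  fixes F :: "real \<Rightarrow> real"
  assumes Fc: "continuous_on {0..1} F" and z: "z \<in> {0..1}" "0 < z"
    and bnd: "\<And>x. 0 \<le> x \<Longrightarrow> x < z \<Longrightarrow> F x \<le> c"
  shows "F z \<le> c"
proof (rule ccontr)
  assume "\<not> F z \<le> c"
  hence e: "F z - c > 0" by simp
  obtain d where d: "d > 0" "\<And>x. x \<in> {0..1} \<Longrightarrow> dist x z < d \<Longrightarrow> dist (F x) (F z) < F z - c"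
    using Fc z(1) e unfolding continuous_on_iff by metis
  define x where "x = max 0 (z - d / 2)"
  have x: "0 \<le> x" "x < z" "x \<in> {0..1}" "dist x z < d" using z d(1) unfolding x_def by (auto simp: dist_real_def)
  have "dist (F x) (F z) < F z - c" using d(2)[OF x(3,4)] .
  moreover have "F x \<le> c" using bnd[OF x(1,2)] .
  ultimately show False by (simp add: dist_real_def abs_if split: if_splits)
qed

lemma key_K:
  fixes F0 G :: "real \<Rightarrow> real" and z :: real
  assumes F0: "is_cdf01 F0" and F0c: "continuous_on {0..1} F0" and F00: "F0 0 = 0"
    and G: "is_cdf01 G"
    and Ipos: "\<And>x. x \<in> {0..1} \<Longrightarrow> integral {0..x} (\<lambda>s. F0 s - G s) \<ge> 0"
    and z: "z \<in> {0..1}" and Iz: "integral {0..z} (\<lambda>s. F0 s - G s) = 0"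
  shows "measure (interval_measure G) {..z} = F0 z" and "measure (interval_measure G) {..<z} = F0 z"
proof -
  define M where "M = interval_measure G"
  interpret real_distribution M unfolding M_def by (rule cdf01_distr[OF G])
  define D where "D s = F0 s - G s" for s
  have Dint: "D integrable_on {x..y}" for x y
    unfolding D_def by (intro integrable_diff cdf_integrable F0 G)
  note Gb = cdf01_basic[OF G] and Fb = cdf01_basic[OF F0]
  define m where "m = measure M {..<z}"
  have Gz: "measure M {..z} = G z" unfolding M_def by (rule cdf01_Iic[OF G])
  have mle: "m \<le> G z" unfolding m_def Gz[symmetric] by (rule finite_measure_mono) auto
  have Gs_le_m: "G s \<le> m" if "s < z" for s
  proof -
    have "G s = measure M {..s}" unfolding M_def by (rule cdf01_Iic[OF G, symmetric])
    also have "\<dots> \<le> m" unfolding m_def by (rule finite_measure_mono) (use that in auto)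
    finally show ?thesis .
  qed
  have R: "G z \<le> F0 z"
  proof (cases "z = 1")
    case True thus ?thesis using F0 G unfolding is_cdf01_def by simp
  next
    case False
    hence z1: "z < 1" using z by simp
    show ?thesis
    proof (rule cont_right_bound[OF F0c z z1])
      fix x assume x: "z < x" "x \<le> 1"
      have comb: "integral {0..x} D = integral {0..z} D + integral {z..x} D"
        using Henstock_Kurzweil_Integration.integral_combine[where a=0 and c=z and b=x and f=D] Dint z x by simp
      have "integral {z..x} D \<ge> 0" using comb Ipos[of x] Iz z x unfolding D_def[abs_def] by simp
      moreover have "integral {z..x} D \<le> integral {z..x} (\<lambda>_. F0 x - G z)"
        by (rule integral_le[OF Dint]) (use x Fb(1) Gb(1) in \<open>auto simp: D_def intro: diff_mono\<close>)
      moreover have "integral {z..x} (\<lambda>_. F0 x - G z) = (x - z) * (F0 x - G z)" using x by simp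
      ultimately have "(x - z) * (F0 x - G z) \<ge> 0" by linarith
      thus "G z \<le> F0 x" using x by (simp add: zero_le_mult_iff)
    qed
  qed
  have L: "F0 z \<le> m"
  proof (cases "z = 0")
    case True thus ?thesis using F00 unfolding m_def by simp
  next
    case False
    hence z0: "0 < z" using z by simp
    show ?thesis
    proof (rule cont_left_bound[OF F0c z z0])
      fix x assume x: "0 \<le> x" "x < z"
      have comb: "integral {0..z} D = integral {0..x} D + integral {x..z} D"
        using Henstock_Kurzweil_Integration.integral_combine[where a=0 and c=x and b=z and f=D] Dint z x by simp
      have "integral {x..z} D \<le> 0" using comb Ipos[of x] Iz z x unfolding D_def[abs_def] by simp
      moreover have "integral {x..z} D = integral {x..z} (\<lambda>s. F0 s - min (G s) m)"
        by (rule integral_spike[of "{z}"]) (auto simp: D_def Gs_le_m min_def)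
      moreover have "integral {x..z} (\<lambda>_. F0 x - m) \<le> integral {x..z} (\<lambda>s. F0 s - min (G s) m)"
      proof (rule integral_le)
        show "(\<lambda>_. F0 x - m) integrable_on {x..z}" by (rule integrable_const_ivl)
        have "(\<lambda>s. min (G s) m) integrable_on {x..z}"
        proof (rule integrable_on_mono_on, rule mono_onI)
          fix r s :: real assume "r \<le> s"
          thus "min (G r) m \<le> min (G s) m" using Gb(1)[of r s] by linarith
        qed
        thus "(\<lambda>s. F0 s - min (G s) m) integrable_on {x..z}"
          by (rule integrable_diff[OF cdf_integrable[OF F0]])
        show "F0 x - m \<le> F0 s - min (G s) m" if "s \<in> {x..z}" for s
          using Fb(1)[of x s] that by (auto simp: min_def)
      qed
      moreover have "integral {x..z} (\<lambda>_. F0 x - m) = (z - x) * (F0 x - m)" using x by simp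
      ultimately have "(z - x) * (F0 x - m) \<le> 0" by linarith
      thus "F0 x \<le> m" using x by (simp add: mult_le_0_iff)
    qed
  qed
  show "measure (interval_measure G) {..z} = F0 z" using Gz R L mle unfolding M_def by simp
  show "measure (interval_measure G) {..<z} = F0 z" using R L mle unfolding M_def m_def by simp
qed

lemma threshold:
  fixes F0 G q \<phi> :: "real \<Rightarrow> real" and y :: real
  assumes F0: "is_cdf01 F0" and F0c: "continuous_on {0..1} F0" and F00: "F0 0 = 0"
    and G: "is_cdf01 G"
    and Ipos: "\<And>x. x \<in> {0..1} \<Longrightarrow> integral {0..x} (\<lambda>s. F0 s - G s) \<ge> 0"
    and I1: "integral {0..1} (\<lambda>s. F0 s - G s) = 0"
    and qm: "mono_on {0..1} q"
    and Z: "\<And>a b. 0 \<le> a \<Longrightarrow> a < b \<Longrightarrow> b \<le> 1 \<Longrightarrow> q a < q b \<Longrightarrow> \<exists>c\<in>{a..b}. integral {0..c} (\<lambda>s. F0 s - G s) = 0"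
    and \<phi>m: "mono \<phi>" and \<phi>c: "\<And>w. \<phi> w = \<phi> (max 0 (min 1 w))"
    and \<phi>q: "\<And>a b. a \<in> {0..1} \<Longrightarrow> b \<in> {0..1} \<Longrightarrow> q a = q b \<Longrightarrow> \<phi> a = \<phi> b"
  shows "measure (interval_measure G) {w. \<phi> w \<le> y} = measure (interval_measure F0) {w. \<phi> w \<le> y}"
proof -
  define S where "S = {w. \<phi> w \<le> y}"
  define I where "I x = integral {0..x} (\<lambda>s. F0 s - G s)" for x
  have KF: "measure (interval_measure F0) {..z} = F0 z \<and> measure (interval_measure F0) {..<z} = F0 z"
    if "z \<in> {0..1}" for z
    using key_K[OF F0 F0c F00 F0 _ that] by simp
  have KG: "measure (interval_measure G) {..z} = F0 z \<and> measure (interval_measure G) {..<z} = F0 z"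
    if "z \<in> {0..1}" "I z = 0" for z
    using key_K[OF F0 F0c F00 G Ipos that(1)] that(2) unfolding I_def by simp
  interpret PG: real_distribution "interval_measure G" by (rule cdf01_distr[OF G])
  interpret PF: real_distribution "interval_measure F0" by (rule cdf01_distr[OF F0])
  consider "1 \<in> S" | "S = {}" | "1 \<notin> S" "S \<noteq> {}" by blast
  then show ?thesis
  proof cases
    case 1
    have "S = UNIV"
    proof (intro set_eqI iffI)
      fix w :: real
      have "\<phi> w \<le> \<phi> 1"
      proof (cases "w \<le> 1")
        case True show ?thesis using monoD[OF \<phi>m True] .
      next
        case False thus ?thesis using \<phi>c[of w] by (simp add: max_def min_def)
      qed
      thus "w \<in> S" using 1 unfolding S_def by simp
    qed simp
    thus ?thesis unfolding S_def[symmetric]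
      using PG.prob_space PF.prob_space by simp
  next
    case 2 thus ?thesis unfolding S_def[symmetric] by simp
  next
    case 3
    have down: "w \<in> S" if "v \<in> S" "w \<le> v" for v w
      using that monoD[OF \<phi>m that(2)] unfolding S_def by simp
    have lt1: "w < 1" if "w \<in> S" for w
    proof (rule ccontr)
      assume "\<not> w < 1"
      hence "1 \<le> w" by simp
      from down[OF that this] 3(1) show False by simp
    qed
    have S0: "0 \<in> S"
    proof -
      obtain w0 where w0: "w0 \<in> S" using 3(2) by blast
      have "min w0 0 \<in> S" using down[OF w0] by simp
      moreover have "\<phi> (min w0 0) = \<phi> 0"
      proof -
        have e: "max 0 (min 1 (min w0 0)) = (0::real)" by simp
        have "\<phi> (min w0 0) = \<phi> (max 0 (min 1 (min w0 0)))" by (rule \<phi>c)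
        also have "\<dots> = \<phi> 0" by (simp only: e)
        finally show ?thesis .
      qed
      ultimately show ?thesis unfolding S_def by simp
    qed
    have bdd: "bdd_above S"
    proof (rule bdd_aboveI)
      fix w assume "w \<in> S" thus "w \<le> 1" using lt1 by (simp add: less_imp_le)
    qed
    define z where "z = Sup S"
    have z0: "0 \<le> z" unfolding z_def using cSup_upper[OF S0 bdd] .
    have z1: "z \<le> 1" unfolding z_def using 3(2) lt1 by (intro cSup_least) (auto intro: less_imp_le)
    have below: "w \<in> S" if "w < z" for w
    proof -
      obtain s where "s \<in> S" "w < s" using \<open>w < z\<close> less_cSup_iff[OF 3(2) bdd] unfolding z_def by blast
      thus ?thesis using down by (meson less_imp_le)
    qed
    have above: "w \<notin> S" if "z < w" for w
      using cSup_upper[OF _ bdd] that unfolding z_def by force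
    have Iz: "I z = 0"
    proof (rule ccontr)
      assume nz: "I z \<noteq> 0"
      have zpos: "0 < z" using nz z0 unfolding I_def by (cases "z = 0") auto
      have zlt: "z < 1" using nz z1 I1 unfolding I_def by (cases "z = 1") auto
      have Ipz: "I z > 0" using Ipos[of z] nz z0 z1 unfolding I_def by simp
      have Dint: "(\<lambda>s. F0 s - G s) integrable_on {0..1}"
        by (intro integrable_diff cdf_integrable F0 G)
      have Ic: "continuous_on {0..1} I" unfolding I_def by (rule indefinite_integral_continuous_1[OF Dint])
      obtain d where d: "d > 0" "\<And>x. x \<in> {0..1} \<Longrightarrow> dist x z < d \<Longrightarrow> dist (I x) (I z) < I z"
        using Ic z0 z1 Ipz unfolding continuous_on_iff by (metis atLeastAtMost_iff)
      define a where "a = max 0 (z - d / 2)"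
      define b where "b = min 1 (z + d / 2)"
      have ab: "0 \<le> a" "a < z" "z < b" "b \<le> 1" using zpos zlt d(1) unfolding a_def b_def by auto
      have "\<not> q a < q b"
      proof
        assume "q a < q b"
        then obtain c where c: "c \<in> {a..b}" "I c = 0" using Z[of a b] ab unfolding I_def by auto
        have "c \<in> {0..1}" "dist c z < d" using c(1) ab d(1) unfolding a_def b_def by (auto simp: dist_real_def)
        from d(2)[OF this] c(2) Ipz show False by (simp add: dist_real_def)
      qed
      moreover have "q a \<le> q b" using ab by (intro mono_onD[OF qm]) auto
      ultimately have "q a = q b" by simp
      hence "\<phi> a = \<phi> b" using ab by (intro \<phi>q) auto
      moreover have "a \<in> S" using below ab by simp
      ultimately have "b \<in> S" unfolding S_def by simp
      thus False using above ab by simp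
    qed
    have zI: "z \<in> {0..1}" using z0 z1 by simp
    show ?thesis
    proof (cases "z \<in> S")
      case True
      have "S = {..z}" using True below above down by (force simp: not_less)
      thus ?thesis using KF[OF zI] KG[OF zI Iz] unfolding S_def by simp
    next
      case False
      have "S = {..<z}" using False below above by (force simp: not_less le_less)
      thus ?thesis using KF[OF zI] KG[OF zI Iz] unfolding S_def by simp
    qed
  qed
qed

lemma exp_diff:
  fixes q t F0 H :: "real \<Rightarrow> real" and qbar :: real
  assumes M: "mechanism qbar q t" and IC: "B_IC q t" and IR: "B_IR q t"
    and F0: "is_cdf01 F0" and H: "is_cdf01 H"
  shows "expect H (\<lambda>w. w * q w - t w) - expect F0 (\<lambda>w. w * q w - t w)
         = integral {0..1} (\<lambda>s. q s * (F0 s - H s))"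
proof -
  note qm = mech_q_mono[OF M IC IR] and qb = mech_q_bnd[OF M IC IR]
  have q0: "\<And>w. w \<in> {0..1} \<Longrightarrow> 0 \<le> q w" using qb by blast
  have qi: "q integrable_on {0..1}" by (rule integrable_on_mono_on[OF qm])
  have iH: "(\<lambda>s. q s * H s) integrable_on {0..1}" by (rule prod_cdf_integrable[OF H qm q0])
  have iF: "(\<lambda>s. q s * F0 s) integrable_on {0..1}" by (rule prod_cdf_integrable[OF F0 qm q0])
  have "integral {0..1} (\<lambda>s. q s * (1 - H s)) = integral {0..1} q - integral {0..1} (\<lambda>s. q s * H s)"
    using integral_diff[OF qi iH] by (simp add: algebra_simps)
  moreover have "integral {0..1} (\<lambda>s. q s * (1 - F0 s)) = integral {0..1} q - integral {0..1} (\<lambda>s. q s * F0 s)"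
    using integral_diff[OF qi iF] by (simp add: algebra_simps)
  moreover have "integral {0..1} (\<lambda>s. q s * (F0 s - H s)) = integral {0..1} (\<lambda>s. q s * F0 s) - integral {0..1} (\<lambda>s. q s * H s)"
    using integral_diff[OF iF iH] by (simp add: algebra_simps)
  ultimately show ?thesis using expect_u[OF M IC IR H] expect_u[OF M IC IR F0] by simp
qed

lemma profit_eq:
  fixes F0 G q t c :: "real \<Rightarrow> real" and qbar :: real
  assumes F0: "is_cdf01 F0" and F0c: "continuous_on {0..1} F0" and F00: "F0 0 = 0"
    and M: "mechanism qbar q t" and IC: "B_IC q t" and IR: "B_IR q t"
    and G: "is_cdf01 G"
    and Ipos: "\<And>x. x \<in> {0..1} \<Longrightarrow> integral {0..x} (\<lambda>s. F0 s - G s) \<ge> 0"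
    and I1: "integral {0..1} (\<lambda>s. F0 s - G s) = 0"
    and c_nonneg: "\<forall>x\<ge>0. c x \<ge> 0" and c_incr: "strict_mono_on {0..} c"
    and Z: "\<And>a b. 0 \<le> a \<Longrightarrow> a < b \<Longrightarrow> b \<le> 1 \<Longrightarrow> q a < q b \<Longrightarrow> \<exists>c\<in>{a..b}. integral {0..c} (\<lambda>s. F0 s - G s) = 0"
  shows "expect G (\<lambda>w. t w - c (q w)) = expect F0 (\<lambda>w. t w - c (q w))"
proof -
  note qm = mech_q_mono[OF M IC IR] and qb = mech_q_bnd[OF M IC IR]
    and tm = mech_t_mono[OF M IC IR] and tb = mech_t_bnd[OF M IC IR]
  define cq where "cq w = c (q w)" for w
  have cqm: "mono_on {0..1} cq"
  proof (rule mono_onI)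
    fix x y :: real assume xy: "x \<in> {0..1}" "y \<in> {0..1}" "x \<le> y"
    have "q x \<le> q y" using xy by (intro mono_onD[OF qm])
    thus "cq x \<le> cq y" unfolding cq_def using qb[OF xy(1)] qb[OF xy(2)]
      by (intro strict_mono_on_leD[OF c_incr]) auto
  qed
  have cqb: "\<bar>cq w\<bar> \<le> c qbar" if "w \<in> {0..1}" for w
  proof -
    have "c (q w) \<le> c qbar" using qb[OF that] by (intro strict_mono_on_leD[OF c_incr]) auto
    moreover have "c (q w) \<ge> 0" using qb[OF that] c_nonneg by auto
    ultimately show ?thesis unfolding cq_def by simp
  qed
  define \<phi>1 where "\<phi>1 w = t (max 0 (min 1 w))" for w
  define \<phi>2 where "\<phi>2 w = cq (max 0 (min 1 w))" for w
  have m1: "mono \<phi>1" unfolding \<phi>1_def by (rule mono_clamp[OF tm])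
  have m2: "mono \<phi>2" unfolding \<phi>2_def by (rule mono_clamp[OF cqm])
  have b1[measurable]: "\<phi>1 \<in> borel_measurable borel" unfolding \<phi>1_def by (rule borel_clamp[OF tm])
  have b2[measurable]: "\<phi>2 \<in> borel_measurable borel" unfolding \<phi>2_def by (rule borel_clamp[OF cqm])
  have clamp2: "max 0 (min 1 (max 0 (min 1 w))) = max 0 (min (1::real) w)" for w by simp
  have e1: "\<phi>1 w = \<phi>1 (max 0 (min 1 w))" for w unfolding \<phi>1_def by (simp only: clamp2)
  have e2: "\<phi>2 w = \<phi>2 (max 0 (min 1 w))" for w unfolding \<phi>2_def by (simp only: clamp2)
  have q1: "\<phi>1 a = \<phi>1 b" if "a \<in> {0..1}" "b \<in> {0..1}" "q a = q b" for a b
    using that mech_t_eq[OF M IC IR that] unfolding \<phi>1_def by simp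
  have q2: "\<phi>2 a = \<phi>2 b" if "a \<in> {0..1}" "b \<in> {0..1}" "q a = q b" for a b
    using that unfolding \<phi>2_def cq_def by simp
  have eq1: "integral\<^sup>L (interval_measure G) \<phi>1 = integral\<^sup>L (interval_measure F0) \<phi>1"
    by (rule integral_eq_by_cdf[OF G F0 b1])
       (rule threshold[OF F0 F0c F00 G Ipos I1 qm Z m1 e1 q1])
  have eq2: "integral\<^sup>L (interval_measure G) \<phi>2 = integral\<^sup>L (interval_measure F0) \<phi>2"
    by (rule integral_eq_by_cdf[OF G F0 b2])
       (rule threshold[OF F0 F0c F00 G Ipos I1 qm Z m2 e2 q2])
  have bb1: "\<bar>\<phi>1 w\<bar> \<le> qbar" if "w \<in> {0..1}" for w using tb[OF that] that unfolding \<phi>1_def by simp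
  have bb2: "\<bar>\<phi>2 w\<bar> \<le> c qbar" if "w \<in> {0..1}" for w using cqb[OF that] that unfolding \<phi>2_def by simp
  have bb12: "\<bar>\<phi>1 w - \<phi>2 w\<bar> \<le> qbar + c qbar" if "w \<in> {0..1}" for w
    using bb1[OF that] bb2[OF that] by (simp add: abs_le_iff)
  have ee: "t w - c (q w) = \<phi>1 w - \<phi>2 w" if "w \<in> {0..1}" for w
    using that unfolding \<phi>1_def \<phi>2_def cq_def by simp
  have b12: "(\<lambda>w. \<phi>1 w - \<phi>2 w) \<in> borel_measurable borel" by measurable
  have iG1: "integrable (interval_measure G) \<phi>1" using expect_as_integral(2)[OF G b1 bb1, of \<phi>1] by simp
  have iG2: "integrable (interval_measure G) \<phi>2" using expect_as_integral(2)[OF G b2 bb2, of \<phi>2] by simp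
  have iF1: "integrable (interval_measure F0) \<phi>1" using expect_as_integral(2)[OF F0 b1 bb1, of \<phi>1] by simp
  have iF2: "integrable (interval_measure F0) \<phi>2" using expect_as_integral(2)[OF F0 b2 bb2, of \<phi>2] by simp
  have "expect G (\<lambda>w. t w - c (q w)) = integral\<^sup>L (interval_measure G) (\<lambda>w. \<phi>1 w - \<phi>2 w)"
    by (rule expect_as_integral(1)[OF G b12 bb12 ee])
  also have "\<dots> = integral\<^sup>L (interval_measure G) \<phi>1 - integral\<^sup>L (interval_measure G) \<phi>2"
    by (rule Bochner_Integration.integral_diff[OF iG1 iG2])
  also have "\<dots> = integral\<^sup>L (interval_measure F0) \<phi>1 - integral\<^sup>L (interval_measure F0) \<phi>2"
    using eq1 eq2 by simp
  also have "\<dots> = integral\<^sup>L (interval_measure F0) (\<lambda>w. \<phi>1 w - \<phi>2 w)"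
    by (rule Bochner_Integration.integral_diff[OF iF1 iF2, symmetric])
  also have "\<dots> = expect F0 (\<lambda>w. t w - c (q w))"
    by (rule expect_as_integral(1)[OF F0 b12 bb12 ee, symmetric])
  finally show ?thesis .
qed


theorem proposition2:
  fixes F0 f0 c :: "real \<Rightarrow> real" and qbar :: real and qMR tMR :: "real \<Rightarrow> real"
  assumes qbar_pos: "qbar > 0"
    and F0_cdf: "is_cdf01 F0"
    and f0_int: "f0 integrable_on {0..1}"
    and F0_density: "\<forall>x\<in>{0..1}. F0 x = integral {0..x} f0"
    and f0_pos: "\<forall>x\<in>{0..1}. f0 x > 0"
    and IHR: "mono_on {0..<1} (\<lambda>x. f0 x / (1 - F0 x))"
    and c_nonneg: "\<forall>x\<ge>0. c x \<ge> 0"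
    and c_incr: "strict_mono_on {0..} c"
    and c_C1: "\<exists>c'. (\<forall>x\<ge>0. (c has_real_derivative c' x) (at x within {0..}))
                    \<and> continuous_on {0..} c'"
    and c_convex: "strictly_convex_on {0..} c"
    and MR: "mussa_rosen F0 c qbar qMR tMR"
  shows "monopolist_solution F0 c 0 qbar qMR tMR F0"
proof -
  have F0c: "continuous_on {0..1} F0"
  proof -
    have "continuous_on {0..1} (\<lambda>x. integral {0..x} f0)"
      by (rule indefinite_integral_continuous_1[OF f0_int])
    thus ?thesis by (rule continuous_on_eq) (use F0_density in auto)
  qed
  have F00: "F0 0 = 0" using F0_density by simp
  have F0MPC: "F0 \<in> MPC F0" unfolding MPC_def using F0_cdf by simp
  have MRm: "mechanism qbar qMR tMR" and MRic: "B_IC qMR tMR" and MRir: "B_IR qMR tMR"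
    and MRopt: "\<And>q' t'. mechanism qbar q' t' \<Longrightarrow> B_IC q' t' \<Longrightarrow> B_IR q' t' \<Longrightarrow>
        expect F0 (\<lambda>\<theta>. t' \<theta> - c (q' \<theta>)) \<le> expect F0 (\<lambda>\<theta>. tMR \<theta> - c (qMR \<theta>))"
    using MR unfolding mussa_rosen_def by blast+
  have MPCD: "is_cdf01 H \<and> (\<forall>x\<in>{0..1}. integral {0..x} (\<lambda>s. F0 s - H s) \<ge> 0)
      \<and> integral {0..1} (\<lambda>s. F0 s - H s) = 0" if "H \<in> MPC F0" for H
    using that unfolding MPC_def by blast
  have IOB: "I_OB F0 0 qMR tMR F0"
    unfolding I_OB_def
  proof (intro conjI ballI F0MPC)
    fix H assume H: "H \<in> MPC F0"
    note Hd = MPCD[OF H]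
    have "integral {0..1} (\<lambda>s. qMR s * (F0 s - H s)) \<le> 0"
      by (rule co_le[OF F0_cdf conjunct1[OF Hd] mech_q_mono[OF MRm MRic MRir]])
         (use mech_q_bnd[OF MRm MRic MRir] Hd in auto)
    thus "expect H (\<lambda>w. (w + 0) * qMR w - tMR w) \<le> expect F0 (\<lambda>w. (w + 0) * qMR w - tMR w)"
      using exp_diff[OF MRm MRic MRir F0_cdf conjunct1[OF Hd]] by simp
  qed
  have feas: "monopolist_feasible F0 0 qbar qMR tMR F0"
    unfolding monopolist_feasible_def using MRm F0MPC MRic MRir IOB by blast
  have opt: "expect G' (\<lambda>w. t' w - c (q' w)) \<le> expect F0 (\<lambda>w. tMR w - c (qMR w))"
    if fe: "monopolist_feasible F0 0 qbar q' t' G'" for q' t' G'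
  proof -
    have m: "mechanism qbar q' t'" and G'M: "G' \<in> MPC F0" and ic: "B_IC q' t'" and ir: "B_IR q' t'"
      and iob: "I_OB F0 0 q' t' G'"
      using fe unfolding monopolist_feasible_def by blast+
    note Gd = MPCD[OF G'M]
    have G': "is_cdf01 G'" using Gd by blast
    have Ipos: "\<And>x. x \<in> {0..1} \<Longrightarrow> integral {0..x} (\<lambda>s. F0 s - G' s) \<ge> 0" using Gd by blast
    have I1: "integral {0..1} (\<lambda>s. F0 s - G' s) = 0" using Gd by blast
    have qm: "mono_on {0..1} q'" by (rule mech_q_mono[OF m ic ir])
    have q0: "\<And>w. w \<in> {0..1} \<Longrightarrow> 0 \<le> q' w" using mech_q_bnd[OF m ic ir] by blast
    have "expect F0 (\<lambda>w. (w + 0) * q' w - t' w) \<le> expect G' (\<lambda>w. (w + 0) * q' w - t' w)"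
      using iob F0MPC unfolding I_OB_def by blast
    hence ge: "integral {0..1} (\<lambda>s. q' s * (F0 s - G' s)) \<ge> 0"
      using exp_diff[OF m ic ir F0_cdf G'] by simp
    have le: "integral {0..1} (\<lambda>s. q' s * (F0 s - G' s)) \<le> 0"
      by (rule co_le[OF F0_cdf G' qm q0 Ipos I1])
    have eq0: "integral {0..1} (\<lambda>s. q' s * (F0 s - G' s)) = 0" using ge le by simp
    have Z: "\<And>a b. 0 \<le> a \<Longrightarrow> a < b \<Longrightarrow> b \<le> 1 \<Longrightarrow> q' a < q' b \<Longrightarrow> \<exists>c\<in>{a..b}. integral {0..c} (\<lambda>s. F0 s - G' s) = 0"
      by (rule co_eq[OF F0_cdf G' qm q0 Ipos I1 eq0])
    have "expect G' (\<lambda>w. t' w - c (q' w)) = expect F0 (\<lambda>w. t' w - c (q' w))"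
      by (rule profit_eq[OF F0_cdf F0c F00 m ic ir G' Ipos I1 c_nonneg c_incr Z])
    also have "\<dots> \<le> expect F0 (\<lambda>w. tMR w - c (qMR w))" by (rule MRopt[OF m ic ir])
    finally show ?thesis .
  qed
  show ?thesis unfolding monopolist_solution_def using feas opt by blast
qed

end
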